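(* Let $(X_{1,\infty},f_{1,\infty},\mu_{1,\infty})$ be a metric nonautonomous dynamical system. For $\mathcal{P}_{1,\infty},\mathcal{Q}_{1,\infty}\in\mathcal{E}_{\max}$ let \[ d_R(\mathcal{P}_{1,\infty},\mathcal{Q}_{1,\infty})=\sup_{n\ge1}H_{\mu_n}(\mathcal{P}_n|\mathcal{Q}_n)+\sup_{n\ge1}H_{\mu_n}(\mathcal{Q}_n|\mathcal{P}_n). \] Then $d_R$ is a metric on $\mathcal{E}_{\max}$ and the function $\mathcal{P}_{1,\infty}\mapsto h(f_{1,\infty};\mathcal{P}_{1,\infty})$ is Lipschitz continuous with Lipschitz constant $1$ on $(\mathcal{E}_{\max},d_R)$.
   Context: A metric NDS consists of probability spaces $(X_n,\mathcal{A}_n,\mu_n)$ and measurable maps $f_n:X_n\to X_{n+1}$ with $f_n\mu_n=\mu_{n+1}$. $f_1^n=f_n\circ\cdots\circ f_1$, $f_1^{-n}$ = preimage under $f_1^n$. $H_\mu(\mathcal{P})=-\sum_P\mu(P)\log\mu(P)$; conditional entropy $H_\mu(\mathcal{P}|\mathcal{Q})=-\sum_{Q}\mu(Q)\sum_P\mu(P|Q)\log\mu(P|Q)$ with $\mu(P|Q)=\mu(P\cap Q)/\mu(Q)$. $h(f_{1,\infty};\mathcal{P}_{1,\infty})=\limsup_n\frac1nH_{\mu_1}(\bigvee_{i=0}^{n-1}f_1^{-i}\mathcal{P}_{i+1})$. $\mathcal{E}_{\max}$ is the class of all sequences $\{\mathcal{P}_n\}$ of finite measurable partitions of $X_n$ with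 $\sup_n\#\mathcal{P}_n<\infty$. *)

theory Defs
  imports "HOL-Probability.Probability"
begin

text \<open>Indices start at 0 (paper: 1).\<close>
definition metric_NDS :: "(nat \<Rightarrow> 'a measure) \<Rightarrow> (nat \<Rightarrow> 'a \<Rightarrow> 'a) \<Rightarrow> bool" where
  "metric_NDS M f \<longleftrightarrow> (\<forall>n. prob_space (M n) \<and> f n \<in> M n \<rightarrow>\<^sub>M M (Suc n)
      \<and> distr (M n) (M (Suc n)) (f n) = M (Suc n))"

definition finite_meas_partition :: "'a measure \<Rightarrow> 'a set set \<Rightarrow> bool" where
  "finite_meas_partition M P \<longleftrightarrow> finite P \<and> P \<subseteq> sets M \<and> \<Union>P = space M
      \<and> disjoint P \<and> {} \<notin> P"

definition E_max :: "(nat \<Rightarrow> 'a measure) \<Rightarrow> (nat \<Rightarrow> 'a set set) set" where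
  "E_max M = {P. (\<forall>n. finite_meas_partition (M n) (P n)) \<and> (\<exists>K. \<forall>n. card (P n) \<le> K)}"

definition entropy_part :: "'a measure \<Rightarrow> 'a set set \<Rightarrow> real" where
  "entropy_part M P = - (\<Sum>A\<in>P. measure M A * ln (measure M A))"

definition cond_entropy_part :: "'a measure \<Rightarrow> 'a set set \<Rightarrow> 'a set set \<Rightarrow> real" where
  "cond_entropy_part M P Q = - (\<Sum>B\<in>Q. measure M B *
      (\<Sum>A\<in>P. (measure M (A \<inter> B) / measure M B) * ln (measure M (A \<inter> B) / measure M B)))"

primrec fcomp :: "(nat \<Rightarrow> 'a \<Rightarrow> 'a) \<Rightarrow> nat \<Rightarrow> 'a \<Rightarrow> 'a" where
  "fcomp f 0 = id"
| "fcomp f (Suc n) = f n \<circ> fcomp f n"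

text \<open>Join of the pulled back partitions f_1^{-i} P_{i+1}, i = 0..n-1, on space (M 0).\<close>
primrec join_part :: "(nat \<Rightarrow> 'a measure) \<Rightarrow> (nat \<Rightarrow> 'a \<Rightarrow> 'a) \<Rightarrow> (nat \<Rightarrow> 'a set set) \<Rightarrow> nat \<Rightarrow> 'a set set" where
  "join_part M f P 0 = {space (M 0)}"
| "join_part M f P (Suc n) =
     {A \<inter> (fcomp f n -` B \<inter> space (M 0)) | A B. A \<in> join_part M f P n \<and> B \<in> P n}"

definition nds_entropy :: "(nat \<Rightarrow> 'a measure) \<Rightarrow> (nat \<Rightarrow> 'a \<Rightarrow> 'a) \<Rightarrow> (nat \<Rightarrow> 'a set set) \<Rightarrow> real" where
  "nds_entropy M f P =
     real_of_ereal (limsup (\<lambda>n. ereal (entropy_part (M 0) (join_part M f P n) / real n)))"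

definition d_R :: "(nat \<Rightarrow> 'a measure) \<Rightarrow> (nat \<Rightarrow> 'a set set) \<Rightarrow> (nat \<Rightarrow> 'a set set) \<Rightarrow> real" where
  "d_R M P Q = (SUP n. cond_entropy_part (M n) (P n) (Q n))
             + (SUP n. cond_entropy_part (M n) (Q n) (P n))"

definition part_eq_mod0 :: "'a measure \<Rightarrow> 'a set set \<Rightarrow> 'a set set \<Rightarrow> bool" where
  "part_eq_mod0 M P Q \<longleftrightarrow>
     (\<forall>A\<in>P. measure M A > 0 \<longrightarrow> (\<exists>B\<in>Q. measure M (A - B) + measure M (B - A) = 0))
   \<and> (\<forall>B\<in>Q. measure M B > 0 \<longrightarrow> (\<exists>A\<in>P. measure M (A - B) + measure M (B - A) = 0))"

end

theory Submission
  imports Defs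
begin


lemma ssa_real:
  fixes t :: "'i \<Rightarrow> 'j \<Rightarrow> real"
  assumes I: "finite I" and J: "finite J" and nn: "\<And>i j. i\<in>I \<Longrightarrow> j\<in>J \<Longrightarrow> 0 \<le> t i j"
  shows "(\<Sum>i\<in>I. (\<Sum>j\<in>J. t i j) * ln (\<Sum>j\<in>J. t i j)) + (\<Sum>j\<in>J. (\<Sum>i\<in>I. t i j) * ln (\<Sum>i\<in>I. t i j))
     \<le> (\<Sum>i\<in>I. \<Sum>j\<in>J. t i j * ln (t i j)) + (\<Sum>i\<in>I. \<Sum>j\<in>J. t i j) * ln (\<Sum>i\<in>I. \<Sum>j\<in>J. t i j)"
proof -
  define x where "x i = (\<Sum>j\<in>J. t i j)" for i
  define y where "y j = (\<Sum>i\<in>I. t i j)" for j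
  define q where "q = (\<Sum>i\<in>I. x i)"
  have q2: "q = (\<Sum>j\<in>J. y j)" unfolding q_def x_def y_def by (rule sum.swap)
  have tx: "t i j \<le> x i" if "i\<in>I" "j\<in>J" for i j
    unfolding x_def using that J nn by (intro member_le_sum) auto
  have ty: "t i j \<le> y j" if "i\<in>I" "j\<in>J" for i j
    unfolding y_def using that I nn by (intro member_le_sum) auto
  have xnn: "0 \<le> x i" if "i\<in>I" for i unfolding x_def using that nn by (intro sum_nonneg) auto
  have ynn: "0 \<le> y j" if "j\<in>J" for j unfolding y_def using that nn by (intro sum_nonneg) auto
  have xq: "x i \<le> q" if "i\<in>I" for i unfolding q_def using that I xnn by (intro member_le_sum) auto
  have key: "t i j * ln (x i) + t i j * ln (y j) - t i j * ln (t i j) - t i j * ln q \<le> x i * y j / q - t i j"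
    if ij: "i\<in>I" "j\<in>J" for i j
  proof (cases "t i j = 0")
    case True
    have "0 \<le> q" using xq[OF ij(1)] xnn[OF ij(1)] by linarith
    then show ?thesis using True xnn ynn ij by simp
  next
    case False
    then have tp: "0 < t i j" using nn ij by (simp add: order_less_le)
    have xp: "0 < x i" using tp tx[OF ij] by linarith
    have yp: "0 < y j" using tp ty[OF ij] by linarith
    have qp: "0 < q" using xp xq[OF ij(1)] by linarith
    have e: "ln (x i * y j / (t i j * q)) = ln (x i) + ln (y j) - ln (t i j) - ln q"
      using xp yp tp qp by (simp add: ln_mult ln_div)
    have "ln (x i * y j / (t i j * q)) \<le> x i * y j / (t i j * q) - 1"
      using xp yp tp qp by (intro ln_le_minus_one) simp
    then have "t i j * ln (x i * y j / (t i j * q)) \<le> t i j * (x i * y j / (t i j * q) - 1)"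
      using tp by (intro mult_left_mono) auto
    also have "\<dots> = x i * y j / q - t i j" using tp by (simp add: field_simps)
    finally have "t i j * ln (x i * y j / (t i j * q)) \<le> x i * y j / q - t i j" .
    then show ?thesis unfolding e by (simp add: algebra_simps)
  qed
  have "(\<Sum>i\<in>I. \<Sum>j\<in>J. t i j * ln (x i) + t i j * ln (y j) - t i j * ln (t i j) - t i j * ln q)
      \<le> (\<Sum>i\<in>I. \<Sum>j\<in>J. x i * y j / q - t i j)"
    using key by (intro sum_mono) auto
  also have "\<dots> = 0"
  proof -
    have "(\<Sum>i\<in>I. \<Sum>j\<in>J. x i * y j / q - t i j) = (\<Sum>i\<in>I. x i * q / q - x i)"
      by (simp add: sum_subtractf sum_distrib_left[symmetric] sum_divide_distrib[symmetric] q2 x_def)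
    also have "\<dots> = (\<Sum>i\<in>I. x i) * q / q - q"
      by (simp only: sum_subtractf sum_divide_distrib[symmetric] sum_distrib_right[symmetric] q_def)
    also have "\<dots> = 0" by (cases "q = 0") (simp_all add: q_def[symmetric])
    finally show ?thesis .
  qed
  finally have le0: "(\<Sum>i\<in>I. \<Sum>j\<in>J. t i j * ln (x i) + t i j * ln (y j) - t i j * ln (t i j) - t i j * ln q) \<le> 0" .
  have s1: "(\<Sum>i\<in>I. \<Sum>j\<in>J. t i j * ln (x i)) = (\<Sum>i\<in>I. x i * ln (x i))"
    by (simp add: x_def sum_distrib_right)
  have s2: "(\<Sum>i\<in>I. \<Sum>j\<in>J. t i j * ln (y j)) = (\<Sum>j\<in>J. y j * ln (y j))"
    by (subst sum.swap) (simp add: y_def sum_distrib_right)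
  have s3: "(\<Sum>i\<in>I. \<Sum>j\<in>J. t i j * ln q) = q * ln q"
    by (simp add: q_def x_def sum_distrib_right)
  have "(\<Sum>i\<in>I. \<Sum>j\<in>J. t i j * ln (x i) + t i j * ln (y j) - t i j * ln (t i j) - t i j * ln q)
     = (\<Sum>i\<in>I. x i * ln (x i)) + (\<Sum>j\<in>J. y j * ln (y j)) - (\<Sum>i\<in>I. \<Sum>j\<in>J. t i j * ln (t i j)) - q * ln q"
    by (simp add: sum.distrib sum_subtractf s1 s2 s3)
  with le0 show ?thesis unfolding x_def[symmetric] y_def[symmetric] q_def[symmetric]
    by (simp add: x_def q_def)
qed




definition fpart :: "'a measure \<Rightarrow> 'a set set \<Rightarrow> bool" where
  "fpart M P \<longleftrightarrow> finite P \<and> P \<subseteq> sets M \<and> \<Union>P = space M \<and> disjoint P"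

definition Join :: "'a set set \<Rightarrow> 'a set set \<Rightarrow> 'a set set" where
  "Join P Q = (\<lambda>(A,B). A \<inter> B) ` (P \<times> Q)"

definition eta :: "real \<Rightarrow> real" where "eta u = - (u * ln u)"

lemma eta_0[simp]: "eta 0 = 0" and eta_1[simp]: "eta 1 = 0" by (simp_all add: eta_def)

lemma Join_commute: "Join P Q = Join Q P"
  unfolding Join_def by auto

lemma Join_eq: "Join P Q = {A \<inter> B | A B. A \<in> P \<and> B \<in> Q}"
  unfolding Join_def by auto

lemma Join_assoc: "Join (Join P Q) R = Join P (Join Q R)"
proof -
  have "Join (Join P Q) R = {A \<inter> B \<inter> C | A B C. A \<in> P \<and> B \<in> Q \<and> C \<in> R}"
    unfolding Join_eq by blast
  also have "\<dots> = Join P (Join Q R)"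
    unfolding Join_eq by (auto simp: Int_assoc)
  finally show ?thesis .
qed

lemma sum_Join:
  assumes "finite P" "finite Q" "disjoint P" "disjoint Q" "g {} = 0"
  shows "sum g (Join P Q) = (\<Sum>A\<in>P. \<Sum>B\<in>Q. g (A \<inter> B))"
proof -
  have "sum g (Join P Q) = sum (g \<circ> (\<lambda>(A,B). A \<inter> B)) (P \<times> Q)"
    unfolding Join_def
  proof (rule sum.reindex_nontrivial)
    show "finite (P \<times> Q)" using assms by simp
    fix x y assume xy: "x \<in> P \<times> Q" "y \<in> P \<times> Q" "x \<noteq> y"
      and e: "(case x of (A, B) \<Rightarrow> A \<inter> B) = (case y of (A, B) \<Rightarrow> A \<inter> B)"
    obtain A B A' B' where x: "x = (A,B)" and y: "y = (A',B')" by (cases x, cases y)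
    have "A \<inter> B = {}"
    proof (cases "A = A'")
      case True
      then have "B \<noteq> B'" using xy x y by auto
      then have "B \<inter> B' = {}" using assms(4) xy x y unfolding disjoint_def disjnt_def by auto
      then show ?thesis using e x y by auto
    next
      case False
      then have "A \<inter> A' = {}" using assms(3) xy x y unfolding disjoint_def disjnt_def by auto
      then show ?thesis using e x y by auto
    qed
    then show "g (case x of (A, B) \<Rightarrow> A \<inter> B) = 0" using x assms(5) by simp
  qed
  also have "\<dots> = (\<Sum>A\<in>P. \<Sum>B\<in>Q. g (A \<inter> B))"
    by (simp add: sum.cartesian_product split_def)
  finally show ?thesis .
qed

context prob_space begin

lemma fpart_Join:
  assumes P: "fpart M P" and Q: "fpart M Q"
  shows "fpart M (Join P Q)"
proof -
  have "finite (Join P Q)" using P Q unfolding fpart_def Join_def by auto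
  moreover have "Join P Q \<subseteq> sets M" using P Q unfolding fpart_def Join_def by auto
  moreover have "\<Union>(Join P Q) = space M"
  proof
    show "\<Union>(Join P Q) \<subseteq> space M" using P unfolding fpart_def Join_def by auto
    show "space M \<subseteq> \<Union>(Join P Q)"
    proof
      fix x assume "x \<in> space M"
      then obtain A B where "A \<in> P" "B \<in> Q" "x \<in> A" "x \<in> B"
        using P Q unfolding fpart_def by (metis UnionE)
      then show "x \<in> \<Union>(Join P Q)" unfolding Join_def by blast
    qed
  qed
  moreover have "disjoint (Join P Q)"
    unfolding disjoint_def disjnt_def
  proof (intro ballI impI)
    fix X Y assume X: "X \<in> Join P Q" and Y: "Y \<in> Join P Q" and XY: "X \<noteq> Y"
    obtain A B where A: "A \<in> P" "B \<in> Q" "X = A \<inter> B" using X unfolding Join_def by auto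
    obtain A' B' where A': "A' \<in> P" "B' \<in> Q" "Y = A' \<inter> B'" using Y unfolding Join_def by auto
    have "A \<noteq> A' \<or> B \<noteq> B'" using A A' XY by auto
    then show "X \<inter> Y = {}"
    proof
      assume "A \<noteq> A'" then have "A \<inter> A' = {}" using P A A' unfolding fpart_def disjoint_def disjnt_def by auto
      then show ?thesis using A A' by auto
    next
      assume "B \<noteq> B'" then have "B \<inter> B' = {}" using Q A A' unfolding fpart_def disjoint_def disjnt_def by auto
      then show ?thesis using A A' by auto
    qed
  qed
  ultimately show ?thesis unfolding fpart_def by blast
qed

lemma fpart_triv: "fpart M {space M}"
  unfolding fpart_def by auto

lemma Join_triv:
  assumes "fpart M R" shows "Join {space M} R = R"
proof -
  have "Join {space M} R = (\<lambda>C. space M \<inter> C) ` R" unfolding Join_def by (auto simp: image_iff)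
  also have "\<dots> = (\<lambda>C. C) ` R" using assms by (intro image_cong) (auto simp: fpart_def)
  finally show ?thesis by simp
qed

lemma entropy_eta: "entropy_part M P = (\<Sum>A\<in>P. eta (prob A))"
  unfolding entropy_part_def eta_def by (simp add: sum_negf)

lemma meas_sum:
  assumes "fpart M R" "S \<in> sets M"
  shows "(\<Sum>C\<in>R. prob (S \<inter> C)) = prob S"
proof -
  have "prob (\<Union>C\<in>R. S \<inter> C) = (\<Sum>C\<in>R. prob (S \<inter> C))"
  proof (intro finite_measure_finite_Union)
    show "disjoint_family_on ((\<inter>) S) R" using assms unfolding fpart_def disjoint_def disjnt_def disjoint_family_on_def
      by blast
  qed (use assms in \<open>auto simp: fpart_def\<close>)
  moreover have "(\<Union>C\<in>R. S \<inter> C) = S"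
    using assms sets.sets_into_space unfolding fpart_def by auto
  ultimately show ?thesis by simp
qed

lemma meas_sum':
  assumes "fpart M R" "S \<in> sets M"
  shows "(\<Sum>C\<in>R. prob (C \<inter> S)) = prob S"
  using meas_sum[OF assms] by (simp add: Int_commute)

lemma H_Join:
  assumes "fpart M P" "fpart M Q"
  shows "entropy_part M (Join P Q) = (\<Sum>A\<in>P. \<Sum>B\<in>Q. eta (prob (A \<inter> B)))"
  unfolding entropy_eta using assms unfolding fpart_def
  by (intro sum_Join) auto

lemma cond_eq:
  assumes P: "fpart M P" and Q: "fpart M Q"
  shows "cond_entropy_part M P Q = entropy_part M (Join P Q) - entropy_part M Q"
proof -
  have PS: "A \<in> sets M" if "A \<in> P" for A using P that unfolding fpart_def by auto
  have QS: "B \<in> sets M" if "B \<in> Q" for B using Q that unfolding fpart_def by auto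
  have tm: "- (prob B * (\<Sum>A\<in>P. (prob (A \<inter> B) / prob B) * ln (prob (A \<inter> B) / prob B)))
      = (\<Sum>A\<in>P. eta (prob (A \<inter> B))) - eta (prob B)" if B: "B \<in> Q" for B
  proof (cases "prob B = 0")
    case True
    have "prob (A \<inter> B) = 0" for A
      using finite_measure_mono[of "A \<inter> B" B] QS[OF B] True measure_nonneg[of M "A \<inter> B"] by auto
    then show ?thesis using True by simp
  next
    case False
    then have pB: "prob B > 0" using measure_nonneg[of M B] by linarith
    have t: "prob B * ((prob (A \<inter> B) / prob B) * ln (prob (A \<inter> B) / prob B))
        = - eta (prob (A \<inter> B)) - prob (A \<inter> B) * ln (prob B)" for A
    proof (cases "prob (A \<inter> B) = 0")
      case True then show ?thesis by simp
    next
      case False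
      then have "prob (A \<inter> B) > 0" using measure_nonneg[of M "A \<inter> B"] by linarith
      then show ?thesis using pB by (simp add: ln_div eta_def algebra_simps)
    qed
    have "- (prob B * (\<Sum>A\<in>P. (prob (A \<inter> B) / prob B) * ln (prob (A \<inter> B) / prob B)))
       = (\<Sum>A\<in>P. eta (prob (A \<inter> B))) + (\<Sum>A\<in>P. prob (A \<inter> B)) * ln (prob B)"
      by (simp only: sum_distrib_left t) (simp add: sum_subtractf sum_negf sum_distrib_right)
    also have "(\<Sum>A\<in>P. prob (A \<inter> B)) = prob B" using meas_sum'[OF P QS[OF B]] .
    finally show ?thesis by (simp add: eta_def)
  qed
  have "cond_entropy_part M P Q = (\<Sum>B\<in>Q. (\<Sum>A\<in>P. eta (prob (A \<inter> B))) - eta (prob B))"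
    unfolding cond_entropy_part_def sum_negf[symmetric] using tm by (intro sum.cong) auto
  also have "\<dots> = (\<Sum>A\<in>P. \<Sum>B\<in>Q. eta (prob (A \<inter> B))) - entropy_part M Q"
    by (simp add: sum_subtractf entropy_eta sum.swap[of _ Q])
  finally show ?thesis using H_Join[OF P Q] by simp
qed

lemma cond_nonneg:
  assumes "P \<subseteq> sets M" "Q \<subseteq> sets M"
  shows "0 \<le> cond_entropy_part M P Q"
proof -
  have "prob B * (\<Sum>A\<in>P. (prob (A \<inter> B) / prob B) * ln (prob (A \<inter> B) / prob B)) \<le> 0"
    if B: "B \<in> Q" for B
  proof -
    have "(prob (A \<inter> B) / prob B) * ln (prob (A \<inter> B) / prob B) \<le> 0" for A
    proof -
      have "prob (A \<inter> B) \<le> prob B" using finite_measure_mono[of "A \<inter> B" B] B assms by auto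
      then have "prob (A \<inter> B) / prob B \<le> 1" by (cases "prob B = 0") (auto simp: divide_le_eq_1 less_le)
      moreover have "0 \<le> prob (A \<inter> B) / prob B" by simp
      ultimately show ?thesis
      proof (cases "prob (A \<inter> B) / prob B = 0")
        case False
        with \<open>0 \<le> prob (A \<inter> B) / prob B\<close> have "0 < prob (A \<inter> B) / prob B" by linarith
        with \<open>prob (A \<inter> B) / prob B \<le> 1\<close> have "ln (prob (A \<inter> B) / prob B) \<le> 0" by simp
        with \<open>0 \<le> prob (A \<inter> B) / prob B\<close> show ?thesis by (rule mult_nonneg_nonpos)
      next
        case True
        show ?thesis by (simp only: True)
      qed
    qed
    then have "(\<Sum>A\<in>P. (prob (A \<inter> B) / prob B) * ln (prob (A \<inter> B) / prob B)) \<le> 0"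
      by (intro sum_nonpos)
    then show ?thesis by (intro mult_nonneg_nonpos) auto
  qed
  then show ?thesis unfolding cond_entropy_part_def by (simp add: sum_nonpos)
qed

end



lemma ssa_eta:
  fixes t :: "'i \<Rightarrow> 'j \<Rightarrow> real"
  assumes I: "finite I" and J: "finite J" and nn: "\<And>i j. i\<in>I \<Longrightarrow> j\<in>J \<Longrightarrow> 0 \<le> t i j"
  shows "(\<Sum>i\<in>I. \<Sum>j\<in>J. eta (t i j)) + eta (\<Sum>i\<in>I. \<Sum>j\<in>J. t i j)
     \<le> (\<Sum>i\<in>I. eta (\<Sum>j\<in>J. t i j)) + (\<Sum>j\<in>J. eta (\<Sum>i\<in>I. t i j))"
proof -
  have "(\<Sum>i\<in>I. (\<Sum>j\<in>J. t i j) * ln (\<Sum>j\<in>J. t i j)) + (\<Sum>j\<in>J. (\<Sum>i\<in>I. t i j) * ln (\<Sum>i\<in>I. t i j))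
     \<le> (\<Sum>i\<in>I. \<Sum>j\<in>J. t i j * ln (t i j)) + (\<Sum>i\<in>I. \<Sum>j\<in>J. t i j) * ln (\<Sum>i\<in>I. \<Sum>j\<in>J. t i j)"
    by (rule ssa_real) (use I J nn in auto)
  then show ?thesis unfolding eta_def by (simp add: sum_negf)
qed

lemma Join_left_commute: "Join P (Join Q R) = Join Q (Join P R)"
  by (metis Join_assoc Join_commute)

lemmas Join_ac = Join_assoc Join_commute Join_left_commute

context prob_space begin

lemma fpart_sets: "fpart M P \<Longrightarrow> A \<in> P \<Longrightarrow> A \<in> sets M"
  unfolding fpart_def by auto

lemma ssa:
  assumes P: "fpart M P" and Q: "fpart M Q" and R: "fpart M R"
  shows "entropy_part M (Join P (Join Q R)) + entropy_part M Q
     \<le> entropy_part M (Join P Q) + entropy_part M (Join Q R)"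
proof -
  have L: "entropy_part M (Join P (Join Q R)) = (\<Sum>B\<in>Q. \<Sum>A\<in>P. \<Sum>C\<in>R. eta (prob (A \<inter> (B \<inter> C))))"
  proof -
    have "entropy_part M (Join P (Join Q R)) = (\<Sum>A\<in>P. \<Sum>D\<in>Join Q R. eta (prob (A \<inter> D)))"
      by (rule H_Join[OF P fpart_Join[OF Q R]])
    also have "\<dots> = (\<Sum>A\<in>P. \<Sum>B\<in>Q. \<Sum>C\<in>R. eta (prob (A \<inter> (B \<inter> C))))"
      using Q R unfolding fpart_def by (intro sum.cong refl sum_Join) auto
    also have "\<dots> = (\<Sum>B\<in>Q. \<Sum>A\<in>P. \<Sum>C\<in>R. eta (prob (A \<inter> (B \<inter> C))))" by (rule sum.swap)
    finally show ?thesis .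
  qed
  have PQ: "entropy_part M (Join P Q) = (\<Sum>B\<in>Q. \<Sum>A\<in>P. eta (prob (A \<inter> B)))"
    unfolding H_Join[OF P Q] by (rule sum.swap)
  have QR: "entropy_part M (Join Q R) = (\<Sum>B\<in>Q. \<Sum>C\<in>R. eta (prob (B \<inter> C)))" by (rule H_Join[OF Q R])
  have HQ: "entropy_part M Q = (\<Sum>B\<in>Q. eta (prob B))" by (rule entropy_eta)
  have per: "(\<Sum>A\<in>P. \<Sum>C\<in>R. eta (prob (A \<inter> (B \<inter> C)))) + eta (prob B)
      \<le> (\<Sum>A\<in>P. eta (prob (A \<inter> B))) + (\<Sum>C\<in>R. eta (prob (B \<inter> C)))" if B: "B \<in> Q" for B
  proof -
    have m1: "(\<Sum>C\<in>R. prob (A \<inter> (B \<inter> C))) = prob (A \<inter> B)" if "A \<in> P" for A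
      using meas_sum[OF R, of "A \<inter> B"] fpart_sets[OF P that] fpart_sets[OF Q B] by (simp add: Int_assoc)
    have m2: "(\<Sum>A\<in>P. prob (A \<inter> (B \<inter> C))) = prob (B \<inter> C)" if "C \<in> R" for C
      using meas_sum'[OF P, of "B \<inter> C"] fpart_sets[OF R that] fpart_sets[OF Q B] by simp
    have m3: "(\<Sum>A\<in>P. prob (A \<inter> B)) = prob B" using meas_sum'[OF P fpart_sets[OF Q B]] .
    have "(\<Sum>A\<in>P. \<Sum>C\<in>R. eta (prob (A \<inter> (B \<inter> C)))) + eta (\<Sum>A\<in>P. \<Sum>C\<in>R. prob (A \<inter> (B \<inter> C)))
     \<le> (\<Sum>A\<in>P. eta (\<Sum>C\<in>R. prob (A \<inter> (B \<inter> C)))) + (\<Sum>C\<in>R. eta (\<Sum>A\<in>P. prob (A \<inter> (B \<inter> C))))"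
      using P R unfolding fpart_def by (intro ssa_eta) auto
    also have "(\<Sum>A\<in>P. eta (\<Sum>C\<in>R. prob (A \<inter> (B \<inter> C)))) = (\<Sum>A\<in>P. eta (prob (A \<inter> B)))"
      using m1 by (intro sum.cong) auto
    also have "(\<Sum>C\<in>R. eta (\<Sum>A\<in>P. prob (A \<inter> (B \<inter> C)))) = (\<Sum>C\<in>R. eta (prob (B \<inter> C)))"
      using m2 by (intro sum.cong) auto
    also have "(\<Sum>A\<in>P. \<Sum>C\<in>R. prob (A \<inter> (B \<inter> C))) = prob B"
      using m1 m3 by (simp cong: sum.cong)
    finally show ?thesis .
  qed
  have "(\<Sum>B\<in>Q. (\<Sum>A\<in>P. \<Sum>C\<in>R. eta (prob (A \<inter> (B \<inter> C)))) + eta (prob B))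
     \<le> (\<Sum>B\<in>Q. (\<Sum>A\<in>P. eta (prob (A \<inter> B))) + (\<Sum>C\<in>R. eta (prob (B \<inter> C))))"
    using per by (rule sum_mono)
  then show ?thesis unfolding L PQ QR HQ by (simp add: sum.distrib)
qed

lemma subadd:
  assumes P: "fpart M P" and R: "fpart M R"
  shows "entropy_part M (Join P R) \<le> entropy_part M P + entropy_part M R"
proof -
  have "entropy_part M (Join P (Join {space M} R)) + entropy_part M {space M}
     \<le> entropy_part M (Join P {space M}) + entropy_part M (Join {space M} R)"
    by (rule ssa[OF P fpart_triv R])
  moreover have "Join P {space M} = P" using Join_triv[OF P] Join_commute by metis
  moreover have "entropy_part M {space M} = 0" by (simp add: entropy_eta prob_space)
  ultimately show ?thesis using Join_triv[OF R] by simp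
qed

lemma H_mono:
  assumes P: "fpart M P" and Q: "fpart M Q"
  shows "entropy_part M Q \<le> entropy_part M (Join P Q)"
  using cond_eq[OF P Q] cond_nonneg[of P Q] P Q unfolding fpart_def by auto

lemma eta_nonneg: "0 \<le> u \<Longrightarrow> u \<le> 1 \<Longrightarrow> 0 \<le> eta u"
  unfolding eta_def by (cases "u = 0") (auto intro!: mult_nonneg_nonpos)

lemma eta_le_1: "0 \<le> u \<Longrightarrow> u \<le> 1 \<Longrightarrow> eta u \<le> 1"
proof (cases "u = 0")
  case False
  assume u: "0 \<le> u" "u \<le> 1"
  then have up: "0 < u" using False by simp
  have "ln (1/u) \<le> 1/u - 1" using up by (intro ln_le_minus_one) simp
  then have "- ln u \<le> 1/u - 1" using up by (simp add: ln_div)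
  then have "u * (- ln u) \<le> u * (1/u - 1)" using up by (intro mult_left_mono) auto
  moreover have "u * (1/u - 1) = 1 - u" using up by (simp add: field_simps)
  moreover have "eta u = u * (- ln u)" unfolding eta_def by simp
  ultimately show ?thesis using u by linarith
qed simp

lemma H_nonneg: "P \<subseteq> sets M \<Longrightarrow> 0 \<le> entropy_part M P"
  unfolding entropy_eta by (intro sum_nonneg eta_nonneg) auto

lemma H_le_card: "entropy_part M P \<le> card P"
proof -
  have "entropy_part M P \<le> of_nat (card P) * 1"
    unfolding entropy_eta by (intro sum_bounded_above eta_le_1) auto
  then show ?thesis by simp
qed

end

definition pre :: "'a measure \<Rightarrow> ('a \<Rightarrow> 'b) \<Rightarrow> 'b set set \<Rightarrow> 'a set set" where
  "pre M g P = (\<lambda>B. g -` B \<inter> space M) ` P"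

lemma pre_Join: "Join (pre M g P) (pre M g Q) = pre M g (Join P Q)"
proof (rule set_eqI, rule iffI)
  fix x assume "x \<in> Join (pre M g P) (pre M g Q)"
  then obtain A B where "A \<in> P" "B \<in> Q" "x = (g -` A \<inter> space M) \<inter> (g -` B \<inter> space M)"
    unfolding pre_def Join_eq by blast
  moreover have "(g -` A \<inter> space M) \<inter> (g -` B \<inter> space M) = g -` (A \<inter> B) \<inter> space M" by auto
  ultimately show "x \<in> pre M g (Join P Q)" unfolding pre_def Join_eq by blast
next
  fix x assume "x \<in> pre M g (Join P Q)"
  then obtain A B where "A \<in> P" "B \<in> Q" "x = g -` (A \<inter> B) \<inter> space M"
    unfolding pre_def Join_eq by blast
  moreover have "(g -` A \<inter> space M) \<inter> (g -` B \<inter> space M) = g -` (A \<inter> B) \<inter> space M" by auto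
  ultimately show "x \<in> Join (pre M g P) (pre M g Q)" unfolding pre_def Join_eq by blast
qed

lemma fpart_pre:
  assumes g: "g \<in> M \<rightarrow>\<^sub>M N" and P: "fpart N P"
  shows "fpart M (pre M g P)"
  unfolding fpart_def
proof (intro conjI)
  show "finite (pre M g P)" using P unfolding pre_def fpart_def by auto
  show "pre M g P \<subseteq> sets M" using P g unfolding pre_def fpart_def by auto
  show "\<Union> (pre M g P) = space M"
    using P measurable_space[OF g] unfolding pre_def fpart_def by blast
  show "disjoint (pre M g P)"
    using P unfolding pre_def fpart_def disjoint_def disjnt_def by blast
qed

lemma H_pre:
  assumes g: "g \<in> M \<rightarrow>\<^sub>M N" and d: "distr M N g = N" and P: "fpart N P"
  shows "entropy_part M (pre M g P) = entropy_part N P"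
proof -
  have "entropy_part M (pre M g P) = (\<Sum>B\<in>P. - (measure M (g -` B \<inter> space M) * ln (measure M (g -` B \<inter> space M))))"
    unfolding entropy_part_def pre_def
  proof (subst sum.reindex_nontrivial)
    show "finite P" using P unfolding fpart_def by auto
    fix x y assume xy: "x \<in> P" "y \<in> P" "x \<noteq> y" and e: "g -` x \<inter> space M = g -` y \<inter> space M"
    then have "x \<inter> y = {}" using P unfolding fpart_def disjoint_def disjnt_def by auto
    then have "g -` x \<inter> space M = {}" using e by auto
    then show "measure M (g -` x \<inter> space M) * ln (measure M (g -` x \<inter> space M)) = 0" by simp
  qed (simp add: sum_negf o_def)
  also have "\<dots> = entropy_part N P"
    unfolding entropy_part_def sum_negf[symmetric]
  proof (intro sum.cong refl)
    fix B assume "B \<in> P"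
    then have "B \<in> sets N" using P unfolding fpart_def by auto
    then have "measure N B = measure M (g -` B \<inter> space M)"
      using measure_distr[OF g, of B] d by simp
    then show "- (measure M (g -` B \<inter> space M) * ln (measure M (g -` B \<inter> space M)))
      = - (measure N B * ln (measure N B))" by simp
  qed
  finally show ?thesis .
qed




context prob_space begin

lemma cond4:
  assumes X: "fpart M X" and X': "fpart M X'" and Y: "fpart M Y" and Y': "fpart M Y'"
  shows "entropy_part M (Join (Join X X') (Join Y Y')) - entropy_part M (Join Y Y')
    \<le> (entropy_part M (Join X Y) - entropy_part M Y) + (entropy_part M (Join X' Y') - entropy_part M Y')"
proof -
  have 1: "entropy_part M (Join X (Join Y Y')) + entropy_part M Y \<le> entropy_part M (Join X Y) + entropy_part M (Join Y Y')"
    by (rule ssa[OF X Y Y'])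
  have 2: "entropy_part M (Join X' (Join Y' (Join X Y))) + entropy_part M Y' \<le> entropy_part M (Join X' Y') + entropy_part M (Join Y' (Join X Y))"
    by (rule ssa[OF X' Y' fpart_Join[OF X Y]])
  have e2: "Join Y' (Join X Y) = Join X (Join Y Y')" by (simp add: Join_ac)
  have e1: "Join X' (Join X (Join Y Y')) = Join (Join X X') (Join Y Y')" by (simp add: Join_ac)
  show ?thesis using 1 2 unfolding e2 e1 by linarith
qed

lemma rlnr_nonpos:
  fixes r :: real
  assumes "0 \<le> r" "r \<le> 1" shows "r * ln r \<le> 0"
proof (cases "r = 0")
  case False
  then have "0 < r" using assms by (simp add: less_le)
  then have "ln r \<le> 0" using assms by simp
  then show ?thesis using assms(1) by (rule mult_nonneg_nonpos[rotated])
qed simp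

lemma ratio_le1: "B \<in> sets M \<Longrightarrow> prob (A \<inter> B) / prob B \<le> 1"
  using finite_measure_mono[of "A \<inter> B" B] by (cases "prob B = 0") (auto simp: divide_le_eq_1 less_le)

lemma cond_zero_imp:
  assumes PS: "P \<subseteq> sets M" and QS: "Q \<subseteq> sets M" and fQ: "finite Q"
    and z: "cond_entropy_part M P Q = 0" and B: "B \<in> Q" and pB: "prob B > 0" and A: "A \<in> P"
    and fP: "finite P"
  shows "prob (A \<inter> B) = 0 \<or> prob (A \<inter> B) = prob B"
proof -
  define r where "r A B = prob (A \<inter> B) / prob B" for A B
  define s where "s B = (\<Sum>A\<in>P. r A B * ln (r A B))" for B
  have inner_nonpos: "r A B * ln (r A B) \<le> 0" if "B \<in> Q" for A B
    unfolding r_def using QS that by (intro rlnr_nonpos ratio_le1) auto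
  have snp: "s B \<le> 0" if "B \<in> Q" for B
    unfolding s_def using inner_nonpos[OF that] by (intro sum_nonpos) auto
  have tnn: "0 \<le> - (prob B * s B)" if "B \<in> Q" for B
    using mult_nonneg_nonpos[OF measure_nonneg[of M B] snp[OF that]] by linarith
  have ce: "cond_entropy_part M P Q = - (\<Sum>B\<in>Q. prob B * s B)"
    unfolding cond_entropy_part_def s_def r_def ..
  have "(\<Sum>B\<in>Q. - (prob B * s B)) = - (\<Sum>B\<in>Q. prob B * s B)" by (rule sum_negf)
  then have "(\<Sum>B\<in>Q. - (prob B * s B)) = 0" using z ce by linarith
  then have "\<forall>B\<in>Q. - (prob B * s B) = 0"
    using sum_nonneg_eq_0_iff[OF fQ, of "\<lambda>B. - (prob B * s B)"] tnn by blast
  then have "prob B * s B = 0" using B by auto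
  then have s0: "s B = 0" using pB by simp
  have "(\<Sum>A\<in>P. - (r A B * ln (r A B))) = - s B" unfolding s_def by (rule sum_negf)
  then have "(\<Sum>A\<in>P. - (r A B * ln (r A B))) = 0" using s0 by linarith
  moreover have "0 \<le> - (r A B * ln (r A B))" for A using inner_nonpos[OF B, of A] by linarith
  ultimately have "\<forall>A\<in>P. - (r A B * ln (r A B)) = 0"
    using sum_nonneg_eq_0_iff[OF fP, of "\<lambda>A. - (r A B * ln (r A B))"] by blast
  then have e: "r A B * ln (r A B) = 0" using A by auto
  show ?thesis
  proof (cases "r A B = 0")
    case True then show ?thesis using pB unfolding r_def by simp
  next
    case False
    have "0 \<le> r A B" unfolding r_def by simp
    with False have rp: "0 < r A B" by (simp add: less_le)
    with e False have "ln (r A B) = 0" by simp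
    then have "r A B = 1" using rp by simp
    then show ?thesis using pB unfolding r_def by simp
  qed
qed

lemma cond_zero_from_mod0:
  assumes P: "fpart M P" and Q: "fpart M Q"
    and h: "\<forall>B\<in>Q. prob B > 0 \<longrightarrow> (\<exists>A\<in>P. prob (A - B) + prob (B - A) = 0)"
  shows "cond_entropy_part M P Q = 0"
proof -
  have "prob B * (\<Sum>A\<in>P. (prob (A \<inter> B) / prob B) * ln (prob (A \<inter> B) / prob B)) = 0"
    if B: "B \<in> Q" for B
  proof (cases "prob B > 0")
    case False then show ?thesis using measure_nonneg[of M B] by simp
  next
    case True
    then obtain A0 where A0: "A0 \<in> P" "prob (A0 - B) + prob (B - A0) = 0" using h B by blast
    have BS: "B \<in> sets M" using fpart_sets[OF Q B] .
    have A0S: "A0 \<in> sets M" using fpart_sets[OF P A0(1)] .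
    have z2: "prob (B - A0) = 0" using A0(2) measure_nonneg[of M "A0 - B"] measure_nonneg[of M "B - A0"] by linarith
    have "(prob (A \<inter> B) / prob B) * ln (prob (A \<inter> B) / prob B) = 0" if A: "A \<in> P" for A
    proof (cases "A = A0")
      case True
      have "prob (B - A0) = prob B - prob (B \<inter> A0)" using finite_measure_Diff'[OF BS A0S] .
      then have "prob (A \<inter> B) = prob B" using z2 True by (simp add: Int_commute)
      then show ?thesis using \<open>prob B > 0\<close> by simp
    next
      case False
      then have "A \<inter> A0 = {}" using P A A0(1) unfolding fpart_def disjoint_def disjnt_def by auto
      then have "A \<inter> B \<subseteq> B - A0" by auto
      then have "prob (A \<inter> B) \<le> prob (B - A0)" using BS A0S by (intro finite_measure_mono) auto
      then have "prob (A \<inter> B) = 0" using z2 measure_nonneg[of M "A \<inter> B"] by linarith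
      then show ?thesis by simp
    qed
    then have "(\<Sum>A\<in>P. (prob (A \<inter> B) / prob B) * ln (prob (A \<inter> B) / prob B)) = 0"
      by (intro sum.neutral) blast
    then show ?thesis by simp
  qed
  then have "(\<Sum>B\<in>Q. prob B * (\<Sum>A\<in>P. (prob (A \<inter> B) / prob B) * ln (prob (A \<inter> B) / prob B))) = 0"
    by (intro sum.neutral) blast
  then show ?thesis unfolding cond_entropy_part_def by linarith
qed

lemma mod0_from_cond_zero:
  assumes P: "fpart M P" and Q: "fpart M Q"
    and z1: "cond_entropy_part M P Q = 0" and z2: "cond_entropy_part M Q P = 0"
    and A: "A \<in> P" and pA: "prob A > 0"
  shows "\<exists>B\<in>Q. prob (A - B) + prob (B - A) = 0"
proof -
  have fP: "finite P" and fQ: "finite Q" and PS: "P \<subseteq> sets M" and QS: "Q \<subseteq> sets M"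
    using P Q unfolding fpart_def by auto
  have AS: "A \<in> sets M" using fpart_sets[OF P A] .
  have "(\<Sum>B\<in>Q. prob (A \<inter> B)) = prob A" using meas_sum[OF Q AS] .
  then obtain B where B: "B \<in> Q" and pAB: "prob (A \<inter> B) \<noteq> 0"
    using pA by (metis (mono_tags, lifting) less_irrefl sum.neutral)
  have BS: "B \<in> sets M" using fpart_sets[OF Q B] .
  have pAB': "prob (A \<inter> B) > 0" using pAB measure_nonneg[of M "A \<inter> B"] by linarith
  have "prob (A \<inter> B) \<le> prob B" using BS by (intro finite_measure_mono) auto
  then have pB: "prob B > 0" using pAB' by linarith
  have e1: "prob (A \<inter> B) = prob B" using cond_zero_imp[OF PS QS fQ z1 B pB A fP] pAB by auto
  have e2: "prob (B \<inter> A) = prob A" using cond_zero_imp[OF QS PS fP z2 A pA B fQ] pAB by (auto simp: Int_commute)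
  have "prob (A - B) = prob A - prob (A \<inter> B)" using finite_measure_Diff'[OF AS BS] .
  moreover have "prob (B - A) = prob B - prob (B \<inter> A)" using finite_measure_Diff'[OF BS AS] .
  ultimately have "prob (A - B) + prob (B - A) = 0" using e1 e2 by (simp add: Int_commute)
  with B show ?thesis by blast
qed

end




lemma limsup_le:
  fixes a b :: "nat \<Rightarrow> real"
  assumes ab: "\<And>n. a n \<le> b n + s" and a0: "\<And>n. 0 \<le> a n" and aK: "\<And>n. a n \<le> Ka"
    and b0: "\<And>n. 0 \<le> b n" and bK: "\<And>n. b n \<le> Kb"
  shows "real_of_ereal (limsup (\<lambda>n. ereal (a n))) \<le> real_of_ereal (limsup (\<lambda>n. ereal (b n))) + s"
proof -
  have 1: "limsup (\<lambda>n. ereal (a n)) \<le> limsup (\<lambda>n. ereal (b n) + ereal s)"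
    by (intro Limsup_mono always_eventually) (simp add: ab)
  have 2: "limsup (\<lambda>n. ereal (b n) + ereal s) = limsup (\<lambda>n. ereal (b n)) + ereal s"
    by (rule Limsup_add_ereal_right) simp_all
  have la: "0 \<le> limsup (\<lambda>n. ereal (a n))" by (intro le_Limsup always_eventually) (simp_all add: a0)
  have ua: "limsup (\<lambda>n. ereal (a n)) \<le> ereal Ka" by (intro Limsup_bounded always_eventually) (simp add: aK)
  have lb: "0 \<le> limsup (\<lambda>n. ereal (b n))" by (intro le_Limsup always_eventually) (simp_all add: b0)
  have ub: "limsup (\<lambda>n. ereal (b n)) \<le> ereal Kb" by (intro Limsup_bounded always_eventually) (simp add: bK)
  obtain xa where xa: "limsup (\<lambda>n. ereal (a n)) = ereal xa" using la ua by (cases "limsup (\<lambda>n. ereal (a n))") auto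
  obtain xb where xb: "limsup (\<lambda>n. ereal (b n)) = ereal xb" using lb ub by (cases "limsup (\<lambda>n. ereal (b n))") auto
  have "ereal xa \<le> ereal xb + ereal s" using 1 2 xa xb by simp
  then have "xa \<le> xb + s" by simp
  then show ?thesis using xa xb by simp
qed

context prob_space begin

lemma cond_triangle:
  assumes P: "fpart M P" and Q: "fpart M Q" and R: "fpart M R"
  shows "cond_entropy_part M P R \<le> cond_entropy_part M P Q + cond_entropy_part M Q R"
proof -
  have "entropy_part M (Join P R) \<le> entropy_part M (Join Q (Join P R))"
    by (rule H_mono[OF Q fpart_Join[OF P R]])
  also have "Join Q (Join P R) = Join P (Join Q R)" by (rule Join_left_commute)
  finally have "entropy_part M (Join P R) \<le> entropy_part M (Join P (Join Q R))" .
  with ssa[OF P Q R] show ?thesis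
    unfolding cond_eq[OF P R] cond_eq[OF P Q] cond_eq[OF Q R] by linarith
qed

lemma cond_le_card:
  assumes P: "fpart M P" and Q: "fpart M Q"
  shows "cond_entropy_part M P Q \<le> card P"
  using subadd[OF P Q] H_le_card[of P] unfolding cond_eq[OF P Q] by linarith

end

lemma nds_ps: "metric_NDS M f \<Longrightarrow> prob_space (M n)"
  unfolding metric_NDS_def by auto

lemma fcomp_props:
  assumes "metric_NDS M f"
  shows "fcomp f n \<in> M 0 \<rightarrow>\<^sub>M M n \<and> distr (M 0) (M n) (fcomp f n) = M n"
proof (induction n)
  case 0
  then show ?case by (simp add: id_def distr_id)
next
  case (Suc n)
  have fn: "f n \<in> M n \<rightarrow>\<^sub>M M (Suc n)" and dn: "distr (M n) (M (Suc n)) (f n) = M (Suc n)"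
    using assms unfolding metric_NDS_def by auto
  have m: "fcomp f (Suc n) \<in> M 0 \<rightarrow>\<^sub>M M (Suc n)"
    using measurable_comp[OF conjunct1[OF Suc] fn] by simp
  have "distr (M 0) (M (Suc n)) (fcomp f (Suc n)) = distr (distr (M 0) (M n) (fcomp f n)) (M (Suc n)) (f n)"
    using distr_distr[OF fn conjunct1[OF Suc]] by simp
  also have "\<dots> = M (Suc n)" using Suc dn by simp
  finally have "distr (M 0) (M (Suc n)) (fcomp f (Suc n)) = M (Suc n)" .
  with m show ?case by blast
qed

lemma join_Suc:
  "join_part M f P (Suc n) = Join (join_part M f P n) (pre (M 0) (fcomp f n) (P n))"
  unfolding join_part.simps pre_def Join_eq by blast

lemma fpart_join:
  assumes N: "metric_NDS M f" and P: "\<And>n. fpart (M n) (P n)"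
  shows "fpart (M 0) (join_part M f P n)"
proof (induction n)
  case 0
  then show ?case using prob_space.fpart_triv[OF nds_ps[OF N]] by simp
next
  case (Suc n)
  show ?case unfolding join_Suc
    by (rule prob_space.fpart_Join[OF nds_ps[OF N] Suc fpart_pre[OF conjunct1[OF fcomp_props[OF N]] P]])
qed

lemma H_join_bound:
  assumes N: "metric_NDS M f" and P: "\<And>n. fpart (M n) (P n)" and K: "\<And>n. card (P n) \<le> K"
  shows "entropy_part (M 0) (join_part M f P n) \<le> real n * real K"
proof (induction n)
  case 0
  interpret prob_space "M 0" by (rule nds_ps[OF N])
  show ?case by (simp add: entropy_eta prob_space.prob_space[OF nds_ps[OF N]])
next
  case (Suc n)
  interpret prob_space "M 0" by (rule nds_ps[OF N])
  have "entropy_part (M 0) (join_part M f P (Suc n))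
      \<le> entropy_part (M 0) (join_part M f P n) + entropy_part (M 0) (pre (M 0) (fcomp f n) (P n))"
    unfolding join_Suc
    by (rule subadd[OF fpart_join[OF N P] fpart_pre[OF conjunct1[OF fcomp_props[OF N]] P]])
  also have "entropy_part (M 0) (pre (M 0) (fcomp f n) (P n)) = entropy_part (M n) (P n)"
    using fcomp_props[OF N, of n] P by (intro H_pre) auto
  also have "\<dots> \<le> real K" using prob_space.H_le_card[OF nds_ps[OF N], of n "P n"] K[of n] by linarith
  finally show ?case using Suc.IH by (simp add: algebra_simps)
qed

lemma key_ineq:
  assumes N: "metric_NDS M f" and P: "\<And>n. fpart (M n) (P n)" and Q: "\<And>n. fpart (M n) (Q n)"
  shows "entropy_part (M 0) (join_part M f P n)
     \<le> entropy_part (M 0) (join_part M f Q n) + (\<Sum>i<n. cond_entropy_part (M i) (P i) (Q i))"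
proof -
  interpret prob_space "M 0" by (rule nds_ps[OF N])
  have c: "entropy_part (M 0) (Join (join_part M f P n) (join_part M f Q n)) - entropy_part (M 0) (join_part M f Q n)
     \<le> (\<Sum>i<n. cond_entropy_part (M i) (P i) (Q i))" for n
  proof (induction n)
    case 0
    have "Join {space (M 0)} {space (M 0)} = {space (M 0)}" by (rule Join_triv[OF fpart_triv])
    then show ?case by simp
  next
    case (Suc n)
    let ?X = "join_part M f P n" and ?Y = "join_part M f Q n"
    let ?X' = "pre (M 0) (fcomp f n) (P n)" and ?Y' = "pre (M 0) (fcomp f n) (Q n)"
    have g: "fcomp f n \<in> M 0 \<rightarrow>\<^sub>M M n" and d: "distr (M 0) (M n) (fcomp f n) = M n"
      using fcomp_props[OF N, of n] by auto
    have X: "fpart (M 0) ?X" by (rule fpart_join[OF N P])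
    have Y: "fpart (M 0) ?Y" by (rule fpart_join[OF N Q])
    have X': "fpart (M 0) ?X'" by (rule fpart_pre[OF g P])
    have Y': "fpart (M 0) ?Y'" by (rule fpart_pre[OF g Q])
    have e1: "entropy_part (M 0) (Join ?X' ?Y') = entropy_part (M n) (Join (P n) (Q n))"
      unfolding pre_Join
      by (rule H_pre[OF g d prob_space.fpart_Join[OF nds_ps[OF N] P Q]])
    have e2: "entropy_part (M 0) ?Y' = entropy_part (M n) (Q n)" by (rule H_pre[OF g d Q])
    have ce: "cond_entropy_part (M n) (P n) (Q n) = entropy_part (M n) (Join (P n) (Q n)) - entropy_part (M n) (Q n)"
      by (rule prob_space.cond_eq[OF nds_ps[OF N] P Q])
    show ?case
      using cond4[OF X X' Y Y'] Suc.IH e1 e2 ce unfolding join_Suc by simp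
  qed
  have "entropy_part (M 0) (join_part M f P n) \<le> entropy_part (M 0) (Join (join_part M f Q n) (join_part M f P n))"
    by (rule H_mono[OF fpart_join[OF N Q] fpart_join[OF N P]])
  then show ?thesis using c[of n] by (simp add: Join_commute)
qed




lemma lip_one:
  assumes N: "metric_NDS M f" and P: "\<And>n. fpart (M n) (P n)" and Q: "\<And>n. fpart (M n) (Q n)"
    and KP: "\<And>n. card (P n) \<le> KP" and KQ: "\<And>n. card (Q n) \<le> KQ"
    and s: "\<And>n. cond_entropy_part (M n) (P n) (Q n) \<le> s" and s0: "0 \<le> s"
  shows "nds_entropy M f P \<le> nds_entropy M f Q + s"
proof -
  interpret prob_space "M 0" by (rule nds_ps[OF N])
  define a where "a n = entropy_part (M 0) (join_part M f P n) / real n" for n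
  define b where "b n = entropy_part (M 0) (join_part M f Q n) / real n" for n
  have ab: "a n \<le> b n + s" for n
  proof (cases "n = 0")
    case True then show ?thesis using s0 by (simp add: a_def b_def)
  next
    case False
    have "(\<Sum>i<n. cond_entropy_part (M i) (P i) (Q i)) \<le> of_nat (card {..<n}) * s"
      by (intro sum_bounded_above s)
    then have "entropy_part (M 0) (join_part M f P n) \<le> entropy_part (M 0) (join_part M f Q n) + real n * s"
      using key_ineq[OF N P Q, of n] by simp
    then show ?thesis using False unfolding a_def b_def by (simp add: field_simps)
  qed
  have nn: "0 \<le> entropy_part (M 0) (join_part M f R n)" if "\<And>n. fpart (M n) (R n)" for R n
    using fpart_join[OF N that, of n] by (intro H_nonneg) (auto simp: fpart_def)
  have a0: "0 \<le> a n" for n unfolding a_def using nn[OF P] by simp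
  have b0: "0 \<le> b n" for n unfolding b_def using nn[OF Q] by simp
  have aK: "a n \<le> real KP" for n
  proof (cases "n = 0")
    case False
    then show ?thesis using H_join_bound[OF N P KP, of n] unfolding a_def by (simp add: field_simps)
  qed (simp add: a_def)
  have bK: "b n \<le> real KQ" for n
  proof (cases "n = 0")
    case False
    then show ?thesis using H_join_bound[OF N Q KQ, of n] unfolding b_def by (simp add: field_simps)
  qed (simp add: b_def)
  show ?thesis unfolding nds_entropy_def
    using limsup_le[of a b s, OF ab a0 aK b0 bK] unfolding a_def b_def .
qed

theorem mainTheorem4:
  fixes M :: "nat \<Rightarrow> 'a measure" and f :: "nat \<Rightarrow> 'a \<Rightarrow> 'a"
  assumes "metric_NDS M f"
  shows "(\<forall>P\<in>E_max M. \<forall>Q\<in>E_max M. \<forall>R\<in>E_max M.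
            d_R M P Q \<ge> 0 \<and> d_R M P P = 0 \<and> d_R M P Q = d_R M Q P
          \<and> d_R M P R \<le> d_R M P Q + d_R M Q R
          \<and> (d_R M P Q = 0 \<longleftrightarrow> (\<forall>n. part_eq_mod0 (M n) (P n) (Q n))))
       \<and> (\<forall>P\<in>E_max M. \<forall>Q\<in>E_max M.
            \<bar>nds_entropy M f P - nds_entropy M f Q\<bar> \<le> 1 * d_R M P Q)"
proof -
  note N = assms
  have ps: "prob_space (M n)" for n by (rule nds_ps[OF N])
  have fp: "fpart (M n) (P n)" if "P \<in> E_max M" for P n
    using that unfolding E_max_def finite_meas_partition_def fpart_def by auto
  have cb: "\<exists>K. \<forall>n. card (P n) \<le> K" if "P \<in> E_max M" for P
    using that unfolding E_max_def by auto
  define S where "S P Q = (SUP n. cond_entropy_part (M n) (P n) (Q n))" for P Q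
  have dR: "d_R M P Q = S P Q + S Q P" for P Q unfolding d_R_def S_def ..
  have cnn: "0 \<le> cond_entropy_part (M n) (P n) (Q n)" if "P \<in> E_max M" "Q \<in> E_max M" for P Q n
    using fp[OF that(1), of n] fp[OF that(2), of n]
    by (intro prob_space.cond_nonneg[OF ps]) (auto simp: fpart_def)
  have bdd: "bdd_above (range (\<lambda>n. cond_entropy_part (M n) (P n) (Q n)))"
    if P: "P \<in> E_max M" and Q: "Q \<in> E_max M" for P Q
  proof -
    obtain K where K: "\<forall>n. card (P n) \<le> K" using cb[OF P] by blast
    have "cond_entropy_part (M n) (P n) (Q n) \<le> real K" for n
      using prob_space.cond_le_card[OF ps fp[OF P] fp[OF Q], of n] K by (meson of_nat_le_iff order_trans)
    then show ?thesis by (intro bdd_aboveI2) 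
  qed
  have Sup: "cond_entropy_part (M n) (P n) (Q n) \<le> S P Q" if "P \<in> E_max M" "Q \<in> E_max M" for P Q n
    unfolding S_def by (rule cSUP_upper[OF _ bdd[OF that]]) simp
  have Snn: "0 \<le> S P Q" if "P \<in> E_max M" "Q \<in> E_max M" for P Q
    using cnn[OF that, of 0] Sup[OF that, of 0] by linarith
  have Sle: "S P Q \<le> c" if "\<And>n. cond_entropy_part (M n) (P n) (Q n) \<le> c" for P Q c
    unfolding S_def by (rule cSUP_least) (auto intro: that)
  have S0: "S P Q = 0 \<longleftrightarrow> (\<forall>n. cond_entropy_part (M n) (P n) (Q n) = 0)"
    if "P \<in> E_max M" "Q \<in> E_max M" for P Q
  proof
    assume "S P Q = 0"
    then show "\<forall>n. cond_entropy_part (M n) (P n) (Q n) = 0"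
      using Sup[OF that] cnn[OF that] by (metis order_antisym)
  next
    assume "\<forall>n. cond_entropy_part (M n) (P n) (Q n) = 0"
    then have "S P Q \<le> 0" by (intro Sle) simp
    then show "S P Q = 0" using Snn[OF that] by linarith
  qed
  have zero: "d_R M P Q = 0 \<longleftrightarrow> (\<forall>n. part_eq_mod0 (M n) (P n) (Q n))"
    if P: "P \<in> E_max M" and Q: "Q \<in> E_max M" for P Q
  proof
    assume "d_R M P Q = 0"
    then have "S P Q = 0" "S Q P = 0" using Snn[OF P Q] Snn[OF Q P] dR[of P Q] by linarith+
    then have z1: "\<And>n. cond_entropy_part (M n) (P n) (Q n) = 0"
      and z2: "\<And>n. cond_entropy_part (M n) (Q n) (P n) = 0"
      using S0[OF P Q] S0[OF Q P] by auto
    show "\<forall>n. part_eq_mod0 (M n) (P n) (Q n)"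
    proof
      fix n
      have h1: "\<forall>A\<in>P n. measure (M n) A > 0 \<longrightarrow> (\<exists>B\<in>Q n. measure (M n) (A - B) + measure (M n) (B - A) = 0)"
        using prob_space.mod0_from_cond_zero[OF ps fp[OF P] fp[OF Q] z1 z2] by blast
      have h2: "\<forall>B\<in>Q n. measure (M n) B > 0 \<longrightarrow> (\<exists>A\<in>P n. measure (M n) (A - B) + measure (M n) (B - A) = 0)"
        using prob_space.mod0_from_cond_zero[OF ps fp[OF Q] fp[OF P] z2 z1] by (metis add.commute)
      show "part_eq_mod0 (M n) (P n) (Q n)" unfolding part_eq_mod0_def using h1 h2 by blast
    qed
  next
    assume h: "\<forall>n. part_eq_mod0 (M n) (P n) (Q n)"
    have "cond_entropy_part (M n) (P n) (Q n) = 0" for n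
      using h unfolding part_eq_mod0_def
      by (intro prob_space.cond_zero_from_mod0[OF ps fp[OF P] fp[OF Q]]) blast
    moreover have "cond_entropy_part (M n) (Q n) (P n) = 0" for n
      using h unfolding part_eq_mod0_def
      by (intro prob_space.cond_zero_from_mod0[OF ps fp[OF Q] fp[OF P]]) (metis add.commute)
    ultimately have "S P Q = 0" "S Q P = 0" using S0[OF P Q] S0[OF Q P] by auto
    then show "d_R M P Q = 0" using dR[of P Q] by simp
  qed
  have part1: "d_R M P Q \<ge> 0 \<and> d_R M P P = 0 \<and> d_R M P Q = d_R M Q P
          \<and> d_R M P R \<le> d_R M P Q + d_R M Q R
          \<and> (d_R M P Q = 0 \<longleftrightarrow> (\<forall>n. part_eq_mod0 (M n) (P n) (Q n)))"
    if P: "P \<in> E_max M" and Q: "Q \<in> E_max M" and R: "R \<in> E_max M" for P Q R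
  proof (intro conjI)
    show "d_R M P Q \<ge> 0" using Snn[OF P Q] Snn[OF Q P] dR[of P Q] by linarith
    have "part_eq_mod0 (M n) (P n) (P n)" for n
      unfolding part_eq_mod0_def
    proof (intro conjI ballI impI)
      fix A assume "A \<in> P n"
      then show "\<exists>B\<in>P n. measure (M n) (A - B) + measure (M n) (B - A) = 0" by (intro bexI[of _ A]) auto
    next
      fix B assume "B \<in> P n"
      then show "\<exists>A\<in>P n. measure (M n) (A - B) + measure (M n) (B - A) = 0" by (intro bexI[of _ B]) auto
    qed
    then show "d_R M P P = 0" using zero[OF P P] by auto
    show "d_R M P Q = d_R M Q P" using dR[of P Q] dR[of Q P] by simp
    show "(d_R M P Q = 0 \<longleftrightarrow> (\<forall>n. part_eq_mod0 (M n) (P n) (Q n)))" by (rule zero[OF P Q])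
    have t1: "S P R \<le> S P Q + S Q R"
    proof (rule Sle)
      fix n
      have "cond_entropy_part (M n) (P n) (R n) \<le> cond_entropy_part (M n) (P n) (Q n) + cond_entropy_part (M n) (Q n) (R n)"
        by (rule prob_space.cond_triangle[OF ps fp[OF P] fp[OF Q] fp[OF R]])
      then show "cond_entropy_part (M n) (P n) (R n) \<le> S P Q + S Q R"
        using Sup[OF P Q, of n] Sup[OF Q R, of n] by linarith
    qed
    have t2: "S R P \<le> S R Q + S Q P"
    proof (rule Sle)
      fix n
      have "cond_entropy_part (M n) (R n) (P n) \<le> cond_entropy_part (M n) (R n) (Q n) + cond_entropy_part (M n) (Q n) (P n)"
        by (rule prob_space.cond_triangle[OF ps fp[OF R] fp[OF Q] fp[OF P]])
      then show "cond_entropy_part (M n) (R n) (P n) \<le> S R Q + S Q P"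
        using Sup[OF R Q, of n] Sup[OF Q P, of n] by linarith
    qed
    show "d_R M P R \<le> d_R M P Q + d_R M Q R" using t1 t2 dR[of P R] dR[of P Q] dR[of Q R] by linarith
  qed
  have part2: "\<bar>nds_entropy M f P - nds_entropy M f Q\<bar> \<le> 1 * d_R M P Q"
    if P: "P \<in> E_max M" and Q: "Q \<in> E_max M" for P Q
  proof -
    obtain KP where KP: "\<And>n. card (P n) \<le> KP" using cb[OF P] by blast
    obtain KQ where KQ: "\<And>n. card (Q n) \<le> KQ" using cb[OF Q] by blast
    have 1: "nds_entropy M f P \<le> nds_entropy M f Q + S P Q"
      by (rule lip_one[OF N fp[OF P] fp[OF Q] KP KQ Sup[OF P Q] Snn[OF P Q]])
    have 2: "nds_entropy M f Q \<le> nds_entropy M f P + S Q P"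
      by (rule lip_one[OF N fp[OF Q] fp[OF P] KQ KP Sup[OF Q P] Snn[OF Q P]])
    show ?thesis using 1 2 dR[of P Q] Snn[OF P Q] Snn[OF Q P] by (simp add: abs_le_iff)
  qed
  show ?thesis using part1 part2 by blast
qed


end
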